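(* Let $\Gamma$ be the 3-hypergraph with vertex set $\mathbb{F}_7=\{0,1,\dots,6\}$ whose edges are the 14 triples $\{0,1,3\},\{0,2,6\},\{0,2,3\},\{0,4,5\},\{0,1,5\},\{0,4,6\},\{1,2,4\},\{2,3,5\},\{3,4,6\},\{1,5,6\},\{1,3,4\},\{2,4,5\},\{3,5,6\},\{1,2,6\}$ (this is one of the two orbits of $\mathrm{AGL}_1(7)=\{x\mapsto ax+b: a\in\mathbb{F}_7^*,b\in\mathbb{F}_7\}$ on 3-subsets). Then $\Gamma$ is set-homogeneous but not homogeneous.
   Context: A 3-hypergraph is a pair $(X,E)$ with $E$ a set of 3-element subsets (edges). It is set-homogeneous if for every $t\ge1$, whenever $U,V\subseteq X$ with $|U|=|V|=t$ carry isomorphic induced subhypergraphs there is an automorphism $g$ with $U^g=V$; homogeneous if every isomorphism between induced subhypergraphs extends to an automorphism. *)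

theory Defs
  imports Main
begin

definition hypergraph3 :: "'a set \<Rightarrow> 'a set set \<Rightarrow> bool" where
  "hypergraph3 X E \<longleftrightarrow> (\<forall>e\<in>E. e \<subseteq> X \<and> card e = 3)"

definition induced_iso :: "'a set \<Rightarrow> 'a set set \<Rightarrow> 'a set \<Rightarrow> 'a set \<Rightarrow> ('a \<Rightarrow> 'a) \<Rightarrow> bool" where
  "induced_iso X E U V f \<longleftrightarrow> U \<subseteq> X \<and> V \<subseteq> X \<and> bij_betw f U V \<and>
     (\<forall>e. e \<subseteq> U \<longrightarrow> (e \<in> E \<longleftrightarrow> f ` e \<in> E))"

definition hg_automorphism :: "'a set \<Rightarrow> 'a set set \<Rightarrow> ('a \<Rightarrow> 'a) \<Rightarrow> bool" where
  "hg_automorphism X E g \<longleftrightarrow> induced_iso X E X X g"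

definition set_homogeneous :: "'a set \<Rightarrow> 'a set set \<Rightarrow> bool" where
  "set_homogeneous X E \<longleftrightarrow>
     (\<forall>t\<ge>1. \<forall>U V. U \<subseteq> X \<and> V \<subseteq> X \<and> finite U \<and> finite V \<and> card U = t \<and> card V = t \<and>
        (\<exists>f. induced_iso X E U V f) \<longrightarrow> (\<exists>g. hg_automorphism X E g \<and> g ` U = V))"

definition homogeneous :: "'a set \<Rightarrow> 'a set set \<Rightarrow> bool" where
  "homogeneous X E \<longleftrightarrow>
     (\<forall>U V f. finite U \<and> induced_iso X E U V f \<longrightarrow>
        (\<exists>g. hg_automorphism X E g \<and> (\<forall>x\<in>U. g x = f x)))"

definition Gamma_V :: "nat set" where
  "Gamma_V = {0..6}"

definition Gamma_E :: "nat set set" where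
  "Gamma_E = {{0,1,3},{0,2,6},{0,2,3},{0,4,5},{0,1,5},{0,4,6},{1,2,4},{2,3,5},{3,4,6},
              {1,5,6},{1,3,4},{2,4,5},{3,5,6},{1,2,6}}"

end

theory Submission imports Defs begin
definition aff :: "nat \<Rightarrow> nat \<Rightarrow> nat \<Rightarrow> nat" where "aff a b x = (a*x+b) mod 7"
definition affs :: "(nat\<times>nat) list" where "affs = List.product [1..<7] [0..<7]"
fun exab :: "(nat\<times>nat) list \<Rightarrow> nat set \<Rightarrow> nat set \<Rightarrow> bool" where
 "exab [] U V = False" | "exab ((a,b)#r) U V = (if aff a b ` U = V then True else exab r U V)"
definition ne :: "nat set \<Rightarrow> nat" where "ne U = card {e\<in>Gamma_E. e \<subseteq> U}"
definition R :: "nat \<Rightarrow> nat \<Rightarrow> nat set" where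
 "R k m = (if k = 0 then {} else if k = 1 then {0} else if k = 2 then {0,1}
   else if k = 3 then (if m = 0 then {0,1,2} else {0,1,3})
   else if k = 4 then (if m = 1 then {0,1,2,4} else {0,1,2,3})
   else if k = 5 then {0,1,2,3,4} else if k = 6 then {0,1,2,3,4,5} else {0,1,2,3,4,5,6})"
definition Q :: "nat set \<Rightarrow> bool" where
 "Q U = (exab affs U (R (card U) (ne U)) \<and> exab affs (R (card U) (ne U)) U)"
fun allL :: "('a \<Rightarrow> bool) \<Rightarrow> 'a list \<Rightarrow> bool" where
 "allL P [] = True" | "allL P (x#xs) = (P x \<and> allL P xs)"
lemma c5: "allL Q (map set (subseqs [0..<7]))" by code_simp
fun allab :: "(nat \<Rightarrow> nat \<Rightarrow> bool) \<Rightarrow> (nat\<times>nat) list \<Rightarrow> bool" where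
 "allab P [] = True" | "allab P ((a,b)#r) = (P a b \<and> allab P r)"
definition P1 where "P1 a b = (aff a b ` Gamma_V = Gamma_V \<and> (\<forall>e\<in>Gamma_E. aff a b ` e \<in> Gamma_E))"
lemma c4: "allab P1 affs" by code_simp
lemma c1: "\<forall>e\<in>Gamma_E. e \<subseteq> Gamma_V \<and> card e = 3" by code_simp

lemma allab_mem: "allab P xs \<Longrightarrow> (a,b) \<in> set xs \<Longrightarrow> P a b"
  by (induction P xs rule: allab.induct) auto
lemma allL_mem: "allL P xs \<Longrightarrow> x \<in> set xs \<Longrightarrow> P x"
  by (induction P xs rule: allL.induct) auto
lemma exab_ex: "exab xs U V \<Longrightarrow> \<exists>a b. (a,b) \<in> set xs \<and> aff a b ` U = V"
  by (induction xs U V rule: exab.induct) (auto split: if_splits)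

lemma finE: "finite Gamma_E" by (simp add: Gamma_E_def)

lemma aut_aff:
  assumes "(a,b) \<in> set affs"
  shows "hg_automorphism Gamma_V Gamma_E (aff a b)"
proof -
  let ?f = "aff a b"
  have P: "P1 a b" using allab_mem[OF c4 assms] .
  have im: "?f ` Gamma_V = Gamma_V" and fw: "\<And>e. e \<in> Gamma_E \<Longrightarrow> ?f ` e \<in> Gamma_E"
    using P unfolding P1_def by auto
  have finV: "finite Gamma_V" by (simp add: Gamma_V_def)
  have "card (?f ` Gamma_V) = card Gamma_V" using im by simp
  then have inj: "inj_on ?f Gamma_V" using eq_card_imp_inj_on[OF finV] by blast
  have injP: "inj_on (image ?f) (Pow Gamma_V)" using inj_on_image_Pow[OF inj] .
  have EP: "Gamma_E \<subseteq> Pow Gamma_V" using c1 by auto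
  have injE: "inj_on (image ?f) Gamma_E" using inj_on_subset[OF injP EP] .
  have imE: "image ?f ` Gamma_E = Gamma_E"
    using endo_inj_surj[OF finE _ injE] fw by auto
  have "\<forall>e. e \<subseteq> Gamma_V \<longrightarrow> (e \<in> Gamma_E \<longleftrightarrow> ?f ` e \<in> Gamma_E)"
  proof (intro allI impI iffI)
    fix e assume "e \<subseteq> Gamma_V" "e \<in> Gamma_E" then show "?f ` e \<in> Gamma_E" using fw by simp
  next
    fix e assume e: "e \<subseteq> Gamma_V" "?f ` e \<in> Gamma_E"
    then obtain e' where e': "e' \<in> Gamma_E" "?f ` e = ?f ` e'" using imE by (metis imageE)
    have "e' \<in> Pow Gamma_V" using EP e'(1) by auto
    then have "e = e'" using inj_onD[OF injP e'(2)] e(1) by blast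
    then show "e \<in> Gamma_E" using e' by simp
  qed
  then show ?thesis unfolding hg_automorphism_def induced_iso_def bij_betw_def
    using inj im by simp
qed

lemma aut_comp:
  assumes "hg_automorphism X E g" "hg_automorphism X E h"
  shows "hg_automorphism X E (h \<circ> g)"
proof -
  have bg: "bij_betw g X X" and bh: "bij_betw h X X"
    and eg: "\<forall>e. e \<subseteq> X \<longrightarrow> (e \<in> E \<longleftrightarrow> g ` e \<in> E)"
    and eh: "\<forall>e. e \<subseteq> X \<longrightarrow> (e \<in> E \<longleftrightarrow> h ` e \<in> E)"
    using assms unfolding hg_automorphism_def induced_iso_def by auto
  have "\<forall>e. e \<subseteq> X \<longrightarrow> (e \<in> E \<longleftrightarrow> (h \<circ> g) ` e \<in> E)"
  proof (intro allI impI)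
    fix e assume e: "e \<subseteq> X"
    then have "g ` e \<subseteq> X" using bg by (auto simp: bij_betw_def)
    moreover have "e \<in> E \<longleftrightarrow> g ` e \<in> E" using eg e by blast
    moreover have "g ` e \<in> E \<longleftrightarrow> h ` (g ` e) \<in> E" using eh \<open>g ` e \<subseteq> X\<close> by blast
    ultimately show "e \<in> E \<longleftrightarrow> (h \<circ> g) ` e \<in> E" by (simp add: image_comp)
  qed
  then show ?thesis unfolding hg_automorphism_def induced_iso_def
    using bij_betw_trans[OF bg bh] by simp
qed

lemma iso_ne:
  assumes "induced_iso X E U V f"
  shows "card {e\<in>E. e \<subseteq> U} = card {e\<in>E. e \<subseteq> V}"
proof -
  have U: "U \<subseteq> X" and b: "bij_betw f U V" and ed: "\<forall>e. e \<subseteq> U \<longrightarrow> (e \<in> E \<longleftrightarrow> f ` e \<in> E)"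
    using assms unfolding induced_iso_def by blast+
  have inj: "inj_on f U" and im: "f ` U = V" using b unfolding bij_betw_def by blast+
  have "bij_betw (image f) {e\<in>E. e \<subseteq> U} {e\<in>E. e \<subseteq> V}"
  proof (rule bij_betw_imageI)
    show "inj_on (image f) {e\<in>E. e \<subseteq> U}"
      by (rule inj_on_subset[OF inj_on_image_Pow[OF inj]]) blast
    show "image f ` {e\<in>E. e \<subseteq> U} = {e\<in>E. e \<subseteq> V}"
    proof
      show "image f ` {e\<in>E. e \<subseteq> U} \<subseteq> {e\<in>E. e \<subseteq> V}"
      proof
        fix y assume "y \<in> image f ` {e\<in>E. e \<subseteq> U}"
        then obtain e where e: "e \<in> E" "e \<subseteq> U" "y = f ` e" by blast
        have "f ` e \<in> E" using ed e(1,2) by blast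
        moreover have "f ` e \<subseteq> V" using e(2) im by blast
        ultimately show "y \<in> {e\<in>E. e \<subseteq> V}" using e(3) by simp
      qed
    next
      show "{e\<in>E. e \<subseteq> V} \<subseteq> image f ` {e\<in>E. e \<subseteq> U}"
      proof
        fix e' assume e': "e' \<in> {e\<in>E. e \<subseteq> V}"
        let ?e = "inv_into U f ` e'"
        have sub: "e' \<subseteq> f ` U" using e' im by simp
        have s: "?e \<subseteq> U"
        proof
          fix x assume "x \<in> ?e"
          then obtain y where "y \<in> e'" "x = inv_into U f y" by blast
          then show "x \<in> U" using sub by (metis inv_into_into subsetD)
        qed
        have fe: "f ` ?e = e'" using image_inv_into_cancel[OF refl sub] by simp
        have "e' \<in> E" using e' by simp
        then have "?e \<in> E" using ed s fe by metis
        then have mem: "?e \<in> {e\<in>E. e \<subseteq> U}" using s by simp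
        have eq: "e' = image f ?e" using fe by simp
        show "e' \<in> image f ` {e\<in>E. e \<subseteq> U}" by (rule image_eqI[where f="image f", OF eq mem])
      qed
    qed
  qed
  then show ?thesis by (rule bij_betw_same_card)
qed

lemma powV: "Pow Gamma_V = set (map set (subseqs [0..<7]))"
proof -
  have "Gamma_V = set [0..<7]" by (auto simp: Gamma_V_def)
  then show ?thesis using subseqs_powset[of "[0..<7::nat]"] by simp
qed

lemma setH: "set_homogeneous Gamma_V Gamma_E"
  unfolding set_homogeneous_def
proof (intro allI impI)
  fix t :: nat and U V
  assume t1: "1 \<le> t"
  assume h: "U \<subseteq> Gamma_V \<and> V \<subseteq> Gamma_V \<and> finite U \<and> finite V \<and> card U = t \<and> card V = t \<and>
        (\<exists>f. induced_iso Gamma_V Gamma_E U V f)"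
  then obtain f where f: "induced_iso Gamma_V Gamma_E U V f" by blast
  have neq: "ne U = ne V" unfolding ne_def using iso_ne[OF f] .
  have QU: "Q U" using allL_mem[OF c5] h powV by (metis Pow_iff)
  have QV: "Q V" using allL_mem[OF c5] h powV by (metis Pow_iff)
  have cq: "card U = card V" using h by simp
  obtain a b where ab: "(a,b) \<in> set affs" "aff a b ` U = R (card U) (ne U)"
    using QU exab_ex unfolding Q_def by blast
  obtain c d where cd: "(c,d) \<in> set affs" "aff c d ` R (card V) (ne V) = V"
    using QV exab_ex unfolding Q_def by blast
  have "hg_automorphism Gamma_V Gamma_E (aff c d \<circ> aff a b)"
    using aut_comp[OF aut_aff[OF ab(1)] aut_aff[OF cd(1)]] .
  moreover have "(aff c d \<circ> aff a b) ` U = V"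
  proof -
    have "(aff c d \<circ> aff a b) ` U = aff c d ` (aff a b ` U)" by (rule image_comp[symmetric])
    then show ?thesis using ab(2) cd(2) neq cq by simp
  qed
  ultimately show "\<exists>g. hg_automorphism Gamma_V Gamma_E g \<and> g ` U = V" by blast
qed

definition sw :: "nat \<Rightarrow> nat" where "sw x = (if x = 0 then 1 else if x = 1 then 0 else x)"
definition K where "K k = (\<not> ({1,0,k} \<in> Gamma_E \<and> {1,2,k} \<in> Gamma_E))"
lemma ck: "allL K [0..<7]" by code_simp
lemma noE0: "\<forall>e\<in>Gamma_E. \<not> e \<subseteq> {0,1,2}" by code_simp
lemma inE: "{0,1,3} \<in> Gamma_E" "{0,2,3} \<in> Gamma_E" by code_simp+

lemma notH: "\<not> homogeneous Gamma_V Gamma_E"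
proof
  assume H: "homogeneous Gamma_V Gamma_E"
  let ?U = "{0,1,2::nat}"
  have noE: "\<And>e. e \<in> Gamma_E \<Longrightarrow> \<not> e \<subseteq> ?U" using noE0 by blast
  have swU: "sw ` ?U = ?U" by (auto simp: sw_def)
  have iso: "induced_iso Gamma_V Gamma_E ?U ?U sw"
    unfolding induced_iso_def
  proof (intro conjI allI impI)
    show "?U \<subseteq> Gamma_V" by (auto simp: Gamma_V_def)
    then show "?U \<subseteq> Gamma_V" .
    have "inj_on sw ?U" unfolding inj_on_def sw_def by simp
    then show "bij_betw sw ?U ?U" using swU by (simp add: bij_betw_def)
    fix e assume eU: "e \<subseteq> ?U"
    then have seU: "sw ` e \<subseteq> ?U" using swU by (metis image_mono)
    have "e \<notin> Gamma_E" using noE eU by metis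
    moreover have "sw ` e \<notin> Gamma_E" using noE seU by metis
    ultimately show "e \<in> Gamma_E \<longleftrightarrow> sw ` e \<in> Gamma_E" by simp
  qed
  obtain g where g: "hg_automorphism Gamma_V Gamma_E g" "\<forall>x\<in>?U. g x = sw x"
  proof -
    have fin: "finite ?U" by simp
    show ?thesis using that H[unfolded homogeneous_def, rule_format, OF conjI[OF fin iso]] by blast
  qed
  have g0: "g 0 = 1" "g 1 = 0" "g 2 = 2" using g(2) by (simp_all add: sw_def)
  have ed: "\<And>e. e \<subseteq> Gamma_V \<Longrightarrow> e \<in> Gamma_E \<Longrightarrow> g ` e \<in> Gamma_E"
    using g(1) unfolding hg_automorphism_def induced_iso_def by simp
  have s1: "{0,1,3} \<subseteq> Gamma_V" "{0,2,3} \<subseteq> Gamma_V" by (auto simp: Gamma_V_def)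
  have e1: "{1,0,g 3} \<in> Gamma_E"
    using ed[OF s1(1) inE(1)] g0 by simp
  have e2: "{1,2,g 3} \<in> Gamma_E"
    using ed[OF s1(2) inE(2)] g0 by (simp add: insert_commute)
  have gV: "g ` Gamma_V = Gamma_V" using g(1) unfolding hg_automorphism_def induced_iso_def bij_betw_def
    by blast
  have "(3::nat) \<in> Gamma_V" by (simp add: Gamma_V_def)
  then have "g 3 \<in> Gamma_V" using gV by (metis imageI)
  moreover have "Gamma_V = set [0..<7]" by (auto simp: Gamma_V_def)
  ultimately have "g 3 \<in> set [0..<7]" by simp
  then have "K (g 3)" using allL_mem[OF ck] by blast
  then show False using e1 e2 unfolding K_def by blast
qed

theorem mainTheorem16:
  shows "hypergraph3 Gamma_V Gamma_E \<and> set_homogeneous Gamma_V Gamma_E \<and> \<not> homogeneous Gamma_V Gamma_E"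
  using c1 setH notH unfolding hypergraph3_def by blast

end
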